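(* Let $G=(V,E)$ be any $n$-vertex $d$-regular graph with girth at least $g$. For any map $\psi:V\to V$ with $\mathrm{rad}_G(\psi)<g/2-1$, we have $$\Pr_{v\in V}\left[|\psi(N_G(v))|<d-\sqrt{d}\right]<\frac{1}{\sqrt{d}},$$ where $v$ is chosen uniformly at random from $V$.
   Context: $G$ is an undirected unweighted graph; $d_G$ denotes its shortest-path metric and $N_G(v)$ the set of neighbors of $v$. The girth of $G$ is the length of its shortest cycle. For $\psi:V\to V$, $\mathrm{rad}_G(\psi)=\max_{v\in V}d_G(v,\psi(v))$. *)

theory Defs
  imports Complex_Main "HOL-Library.Extended_Nat"
begin

definition sgraph :: "'a set \<Rightarrow> ('a \<Rightarrow> 'a \<Rightarrow> bool) \<Rightarrow> bool" where
  "sgraph V E \<longleftrightarrow> finite V \<and> (\<forall>u v. E u v \<longrightarrow> u \<in> V \<and> v \<in> V)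
     \<and> (\<forall>u v. E u v \<longrightarrow> E v u) \<and> (\<forall>v. \<not> E v v)"

definition neighbors :: "('a \<Rightarrow> 'a \<Rightarrow> bool) \<Rightarrow> 'a \<Rightarrow> 'a set" where
  "neighbors E v = {u. E v u}"

definition regular :: "'a set \<Rightarrow> ('a \<Rightarrow> 'a \<Rightarrow> bool) \<Rightarrow> nat \<Rightarrow> bool" where
  "regular V E d \<longleftrightarrow> (\<forall>v\<in>V. card (neighbors E v) = d)"

text \<open>A walk is a nonempty vertex list with consecutive vertices adjacent; its length is length xs - 1.\<close>
definition walk :: "('a \<Rightarrow> 'a \<Rightarrow> bool) \<Rightarrow> 'a list \<Rightarrow> bool" where
  "walk E xs \<longleftrightarrow> xs \<noteq> [] \<and> (\<forall>i. Suc i < length xs \<longrightarrow> E (xs ! i) (xs ! Suc i))"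

definition gdist :: "('a \<Rightarrow> 'a \<Rightarrow> bool) \<Rightarrow> 'a \<Rightarrow> 'a \<Rightarrow> enat" where
  "gdist E u v = (if \<exists>xs. walk E xs \<and> hd xs = u \<and> last xs = v
     then enat (LEAST k. \<exists>xs. walk E xs \<and> hd xs = u \<and> last xs = v \<and> length xs = Suc k)
     else \<infinity>)"

definition is_cycle :: "('a \<Rightarrow> 'a \<Rightarrow> bool) \<Rightarrow> 'a list \<Rightarrow> bool" where
  "is_cycle E xs \<longleftrightarrow> length xs \<ge> 3 \<and> distinct xs \<and>
     (\<forall>i < length xs. E (xs ! i) (xs ! ((i + 1) mod length xs)))"

definition girth_ge :: "'a set \<Rightarrow> ('a \<Rightarrow> 'a \<Rightarrow> bool) \<Rightarrow> nat \<Rightarrow> bool" where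
  "girth_ge V E g \<longleftrightarrow> (\<forall>xs. set xs \<subseteq> V \<and> is_cycle E xs \<longrightarrow> length xs \<ge> g)"

definition rad :: "'a set \<Rightarrow> ('a \<Rightarrow> 'a \<Rightarrow> bool) \<Rightarrow> ('a \<Rightarrow> 'a) \<Rightarrow> enat" where
  "rad V E \<psi> = (SUP v\<in>V. gdist E v (\<psi> v))"

end

theory Submission
  imports Defs
begin

lemma walk_single[simp]: "walk E [a]"
  by (simp add: walk_def)

lemma walk_Cons2[simp]: "walk E (a # b # zs) \<longleftrightarrow> E a b \<and> walk E (b # zs)"
proof
  assume h: "walk E (a # b # zs)"
  have h': "Suc i < length (a # b # zs) \<Longrightarrow> E ((a # b # zs) ! i) ((a # b # zs) ! Suc i)" for i
    using h unfolding walk_def by blast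
  have "E a b" using h'[of 0] by simp
  moreover have "E ((b # zs) ! i) ((b # zs) ! Suc i)" if "Suc i < length (b # zs)" for i
    using h'[of "Suc i"] that by simp
  ultimately show "E a b \<and> walk E (b # zs)" unfolding walk_def by simp
next
  assume h: "E a b \<and> walk E (b # zs)"
  have h': "Suc i < length (b # zs) \<Longrightarrow> E ((b # zs) ! i) ((b # zs) ! Suc i)" for i
    using h unfolding walk_def by blast
  have "E ((a # b # zs) ! i) ((a # b # zs) ! Suc i)" if "Suc i < length (a # b # zs)" for i
  proof (cases i)
    case 0 then show ?thesis using h by simp
  next
    case (Suc j) then show ?thesis using h'[of j] that by simp
  qed
  then show "walk E (a # b # zs)" unfolding walk_def by simp
qed

lemma walk_Nil[simp]: "\<not> walk E []" by (simp add: walk_def)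

lemma walk_append:
  "walk E xs \<Longrightarrow> walk E ys \<Longrightarrow> E (last xs) (hd ys) \<Longrightarrow> walk E (xs @ ys)"
proof (induction xs rule: induct_list012)
  case 1 then show ?case by simp
next
  case (2 x) then show ?case by (cases ys) auto
next
  case (3 x y zs) then show ?case by auto
qed

lemma walk_take: "walk E xs \<Longrightarrow> 0 < n \<Longrightarrow> walk E (take n xs)"
  unfolding walk_def
proof (intro conjI allI impI)
  assume "xs \<noteq> [] \<and> (\<forall>i. Suc i < length xs \<longrightarrow> E (xs ! i) (xs ! Suc i))" "0 < n"
  then show "take n xs \<noteq> []" by simp
next
  fix i assume h: "xs \<noteq> [] \<and> (\<forall>i. Suc i < length xs \<longrightarrow> E (xs ! i) (xs ! Suc i))"
    and i: "Suc i < length (take n xs)"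
  then have "Suc i < length xs" "Suc i < n" by auto
  then show "E (take n xs ! i) (take n xs ! Suc i)" using h by simp
qed

lemma walk_drop: "walk E xs \<Longrightarrow> n < length xs \<Longrightarrow> walk E (drop n xs)"
  unfolding walk_def
proof (intro conjI allI impI)
  assume "xs \<noteq> [] \<and> (\<forall>i. Suc i < length xs \<longrightarrow> E (xs ! i) (xs ! Suc i))" "n < length xs"
  then show "drop n xs \<noteq> []" by simp
next
  fix i assume h: "xs \<noteq> [] \<and> (\<forall>i. Suc i < length xs \<longrightarrow> E (xs ! i) (xs ! Suc i))"
    and i: "Suc i < length (drop n xs)"
  then have "Suc (n + i) < length xs" by auto
  then show "E (drop n xs ! i) (drop n xs ! Suc i)" using h by simp
qed

lemma walk_rev: "(\<forall>u v. E u v \<longrightarrow> E v u) \<Longrightarrow> walk E xs \<Longrightarrow> walk E (rev xs)"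
proof (induction xs rule: induct_list012)
  case 1 then show ?case by simp
next
  case (2 x) then show ?case by simp
next
  case (3 x y zs)
  then have "walk E (rev (y # zs))" by simp
  then show ?case using 3 walk_append[of E "rev (y#zs)" "[x]"] by simp
qed

definition W :: "('a \<Rightarrow> 'a \<Rightarrow> bool) \<Rightarrow> 'a \<Rightarrow> 'a \<Rightarrow> nat \<Rightarrow> bool" where
  "W E x y k \<longleftrightarrow> (\<exists>xs. walk E xs \<and> hd xs = x \<and> last xs = y \<and> length xs = Suc k)"

definition dd :: "('a \<Rightarrow> 'a \<Rightarrow> bool) \<Rightarrow> 'a \<Rightarrow> 'a \<Rightarrow> nat" where
  "dd E x y = (LEAST k. W E x y k)"

lemma dd_le: "W E x y k \<Longrightarrow> dd E x y \<le> k"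
  unfolding dd_def by (rule Least_le)

lemma dd_W: "W E x y k \<Longrightarrow> W E x y (dd E x y)"
  unfolding dd_def by (rule LeastI)

lemma W_snoc: "W E x a k \<Longrightarrow> E a v \<Longrightarrow> W E x v (Suc k)"
proof -
  assume "W E x a k" "E a v"
  then obtain xs where xs: "walk E xs" "hd xs = x" "last xs = a" "length xs = Suc k"
    unfolding W_def by blast
  then have "walk E (xs @ [v])" using walk_append[of E xs "[v]"] \<open>E a v\<close> by simp
  then show ?thesis unfolding W_def using xs
    by (intro exI[of _ "xs @ [v]"]) (auto simp: hd_append)
qed

lemma last_take_Suc: "i < length xs \<Longrightarrow> last (take (Suc i) xs) = xs ! i"
  by (simp add: take_Suc_conv_app_nth)

lemma W_prefix: "walk E xs \<Longrightarrow> hd xs = x \<Longrightarrow> i < length xs \<Longrightarrow> W E x (xs ! i) i"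
  unfolding W_def
  apply (rule exI[of _ "take (Suc i) xs"])
  using walk_take[of E xs "Suc i"] by (auto simp: last_take_Suc hd_conv_nth min_def)

lemma dd_prefix: "walk E xs \<Longrightarrow> hd xs = x \<Longrightarrow> i < length xs \<Longrightarrow> dd E x (xs ! i) \<le> i"
  using W_prefix dd_le by metis

lemma shortest_distinct:
  assumes w: "walk E xs" "hd xs = x" "last xs = y" "length xs = Suc (dd E x y)"
  shows "distinct xs"
proof (rule ccontr)
  assume "\<not> distinct xs"
  then obtain i j where ij: "i < j" "j < length xs" "xs ! i = xs ! j"
    by (metis distinct_conv_nth linorder_neqE_nat)
  define ys where "ys = take i xs @ drop j xs"
  have ne: "xs \<noteq> []" using w by auto
  have dj: "drop j xs \<noteq> []" "hd (drop j xs) = xs ! j" using ij by (auto simp: hd_drop_conv_nth)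
  have wy: "walk E ys"
  proof (cases i)
    case 0 then show ?thesis unfolding ys_def using walk_drop[OF w(1) ij(2)] by simp
  next
    case (Suc i')
    have "walk E (take i xs)" using walk_take[OF w(1)] Suc by simp
    moreover have "last (take i xs) = xs ! i'" using Suc ij last_take_Suc[of i' xs] by simp
    moreover have "Suc i' < length xs" using Suc ij by simp
    then have "E (xs ! i') (xs ! Suc i')" using w(1) unfolding walk_def by blast
    then have "E (xs ! i') (xs ! i)" using Suc by simp
    moreover have "E (last (take i xs)) (hd (drop j xs))"
      using calculation(2) \<open>E (xs ! i') (xs ! i)\<close> dj ij(3) by simp
    ultimately show ?thesis unfolding ys_def using walk_append walk_drop[OF w(1) ij(2)] by blast
  qed
  have "hd ys = x"
  proof (cases i)
    case 0 then show ?thesis unfolding ys_def using dj ij w(2) ne by (simp add: hd_conv_nth)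
  next
    case (Suc i') then show ?thesis unfolding ys_def using ij w(2) ne by (cases xs) auto
  qed
  moreover have "last ys = y" unfolding ys_def using dj w(3) ij by simp
  moreover have "length ys = Suc (dd E x y - (j - i))" unfolding ys_def using ij w(4) by auto
  ultimately have "W E x y (dd E x y - (j - i))" using wy unfolding W_def by blast
  then have "dd E x y \<le> dd E x y - (j - i)" by (rule dd_le)
  then show False using ij w(4) by linarith
qed

definition nb :: "'a list \<Rightarrow> bool" where
  "nb xs \<longleftrightarrow> (\<forall>i. Suc (Suc i) < length xs \<longrightarrow> xs ! i \<noteq> xs ! Suc (Suc i))"

lemma distinct_nb: "distinct xs \<Longrightarrow> nb xs"
  unfolding nb_def by (simp add: nth_eq_iff_index_eq)

lemma cycle_from_walk:
  assumes irr: "\<forall>v. \<not> E v v" and w: "walk E xs" and n: "nb xs" and nd: "\<not> distinct xs"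
  shows "\<exists>ys. is_cycle E ys \<and> length ys < length xs"
proof -
  let ?P = "\<lambda>p. fst p < snd p \<and> snd p < length xs \<and> xs ! fst p = xs ! snd p"
  obtain i0 j0 where "i0 < j0" "j0 < length xs" "xs ! i0 = xs ! j0"
    using nd by (metis distinct_conv_nth linorder_neqE_nat)
  then have "?P (i0, j0)" by simp
  then obtain p where p: "?P p" and pmin: "\<forall>q. ?P q \<longrightarrow> snd p - fst p \<le> snd q - fst q"
    using ex_has_least_nat[of ?P "(i0,j0)" "\<lambda>p. snd p - fst p"] by blast
  obtain i j where pij: "p = (i, j)" by (cases p)
  have ij: "i < j" "j < length xs" "xs ! i = xs ! j" using p pij by auto
  have min: "\<And>a b. a < b \<Longrightarrow> b < length xs \<Longrightarrow> xs ! a = xs ! b \<Longrightarrow> j - i \<le> b - a"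
    using pmin pij by fastforce
  have edge: "\<And>t. Suc t < length xs \<Longrightarrow> E (xs ! t) (xs ! Suc t)" using w unfolding walk_def by auto
  define ys where "ys = take (j - i) (drop i xs)"
  have len: "length ys = j - i" unfolding ys_def using ij by auto
  have ysn: "\<And>t. t < j - i \<Longrightarrow> ys ! t = xs ! (i + t)" unfolding ys_def using ij by auto
  have "j - i \<noteq> 1"
  proof
    assume "j - i = 1"
    then have "j = Suc i" by simp
    then show False using edge[of i] ij irr by auto
  qed
  moreover have "j - i \<noteq> 2"
  proof
    assume "j - i = 2"
    then have "j = Suc (Suc i)" by simp
    then show False using n ij unfolding nb_def by auto
  qed
  ultimately have len3: "length ys \<ge> 3" using len ij by linarith
  have dys: "distinct ys"
    unfolding distinct_conv_nth
  proof (intro allI impI)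
    fix s t assume st: "s < length ys" "t < length ys" "s \<noteq> t"
    show "ys ! s \<noteq> ys ! t"
    proof
      assume eq: "ys ! s = ys ! t"
      show False
      proof (cases "s < t")
        case True
        have "xs ! (i + s) = xs ! (i + t)" using eq ysn st len by simp
        then have "j - i \<le> (i + t) - (i + s)" using min[of "i+s" "i+t"] True st len ij by simp
        then show False using True st len by linarith
      next
        case False
        then have "t < s" using st by simp
        have "xs ! (i + t) = xs ! (i + s)" using eq ysn st len by simp
        then have "j - i \<le> (i + s) - (i + t)" using min[of "i+t" "i+s"] \<open>t < s\<close> st len ij by simp
        then show False using \<open>t < s\<close> st len by linarith
      qed
    qed
  qed
  have cyc: "\<forall>t < length ys. E (ys ! t) (ys ! ((t + 1) mod length ys))"
  proof (intro allI impI)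
    fix t assume t: "t < length ys"
    show "E (ys ! t) (ys ! ((t + 1) mod length ys))"
    proof (cases "Suc t < length ys")
      case True
      then have "(t + 1) mod length ys = Suc t" by simp
      then show ?thesis using True ysn len edge[of "i + t"] ij by simp
    next
      case False
      then have "Suc t = length ys" using t by simp
      then have "(t + 1) mod length ys = 0" by simp
      moreover have "ys ! 0 = xs ! j" using ysn[of 0] len ij by simp
      moreover have "ys ! t = xs ! (i + t)" using ysn t len by simp
      moreover have "Suc (i + t) = j" using \<open>Suc t = length ys\<close> len ij by simp
      ultimately show ?thesis using edge[of "i + t"] ij by simp
    qed
  qed
  have "is_cycle E ys" unfolding is_cycle_def using len3 dys cyc by simp
  moreover have "length ys < length xs" using len ij by simp
  ultimately show ?thesis by blast
qed

lemma nb_append: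
  assumes "nb xs" "nb ys" "xs \<noteq> []" "ys \<noteq> []"
    and j1: "length ys \<ge> 2 \<Longrightarrow> last xs \<noteq> ys ! 1"
    and j2: "length xs \<ge> 2 \<Longrightarrow> xs ! (length xs - 2) \<noteq> hd ys"
  shows "nb (xs @ ys)"
  unfolding nb_def
proof (intro allI impI)
  fix i assume i: "Suc (Suc i) < length (xs @ ys)"
  consider "Suc (Suc i) < length xs" | "Suc (Suc i) = length xs" | "Suc i = length xs" | "i \<ge> length xs"
    by linarith
  then show "(xs @ ys) ! i \<noteq> (xs @ ys) ! Suc (Suc i)"
  proof cases
    case 1 then show ?thesis using assms(1) unfolding nb_def by (simp add: nth_append)
  next
    case 2
    then have "length xs - 2 = i" by simp
    then have "xs ! (length xs - 2) = xs ! i" by simp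
    then show ?thesis using j2 2 assms(4) by (simp add: nth_append hd_conv_nth)
  next
    case 3
    then have "length ys \<ge> 2" using i by simp
    moreover have "length xs - Suc 0 = i" using 3 by simp
    then have "last xs = xs ! i" using assms(3) by (simp add: last_conv_nth)
    ultimately show ?thesis using j1 3 by (simp add: nth_append)
  next
    case 4
    then have "Suc (Suc (i - length xs)) < length ys" using i by simp
    then show ?thesis using 4 assms(2) unfolding nb_def
      by (simp add: nth_append Suc_diff_le)
  qed
qed

locale gg =
  fixes V :: "'a set" and E :: "'a \<Rightarrow> 'a \<Rightarrow> bool" and g :: nat
  assumes sg: "sgraph V E" and gi: "girth_ge V E g"
begin

lemma sym: "E u v \<Longrightarrow> E v u" using sg unfolding sgraph_def by blast
lemma irr: "\<forall>v. \<not> E v v" using sg unfolding sgraph_def by blast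
lemma inV: "E u v \<Longrightarrow> u \<in> V" using sg unfolding sgraph_def by blast

lemma girth_cycle: "is_cycle E ys \<Longrightarrow> g \<le> length ys"
proof -
  assume c: "is_cycle E ys"
  have "set ys \<subseteq> V"
  proof
    fix u assume "u \<in> set ys"
    then obtain t where "t < length ys" "ys ! t = u" by (auto simp: in_set_conv_nth)
    then show "u \<in> V" using c inV unfolding is_cycle_def by blast
  qed
  then show ?thesis using gi c unfolding girth_ge_def by blast
qed

lemma walk_girth: "walk E xs \<Longrightarrow> nb xs \<Longrightarrow> \<not> distinct xs \<Longrightarrow> g < length xs"
  using cycle_from_walk[of E, OF irr] girth_cycle by fastforce

lemma shortest:
  assumes "W E x p k" "dd E x p = k"
  obtains P where "walk E P" "hd P = x" "last P = p" "length P = Suc k" "distinct P"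
proof -
  obtain P where "walk E P" "hd P = x" "last P = p" "length P = Suc k"
    using assms unfolding W_def by blast
  moreover then have "distinct P" using shortest_distinct assms(2) by metis
  ultimately show ?thesis using that by blast
qed

lemma F_adj:
  assumes "W E x p k" "dd E x p = k" "W E x q k" "dd E x q = k" "E p q"
  shows "g \<le> 2 * k + 1"
proof -
  obtain P where P: "walk E P" "hd P = x" "last P = p" "length P = Suc k" "distinct P"
    using shortest assms(1,2) by blast
  obtain Q where Q: "walk E Q" "hd Q = x" "last Q = q" "length Q = Suc k" "distinct Q"
    using shortest assms(3,4) by blast
  have PQne: "P \<noteq> []" "Q \<noteq> []" using P Q by auto
  define L where "L = P @ rev Q"
  have wL: "walk E L" unfolding L_def
    using walk_append[OF P(1) walk_rev[OF _ Q(1)]] sym assms(5) P(3) Q(3) PQne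
    by (simp add: hd_rev)
  have "x \<in> set P" using P(2) PQne(1) hd_in_set by metis
  moreover have "x \<in> set (rev Q)" using Q(2) PQne(2) hd_in_set set_rev by metis
  ultimately have ndL: "\<not> distinct L" unfolding L_def by auto
  have j1: "last P \<noteq> rev Q ! 1" if "length (rev Q) \<ge> 2"
  proof -
    have "rev Q ! 1 = Q ! (k - 1)" using that Q(4) by (simp add: rev_nth)
    moreover have "dd E x (Q ! (k - 1)) \<le> k - 1" using dd_prefix[OF Q(1) Q(2)] Q(4) by simp
    ultimately show ?thesis using P(3) assms(2) that Q(4) by auto
  qed
  have j2: "P ! (length P - 2) \<noteq> hd (rev Q)" if "length P \<ge> 2"
  proof -
    have "dd E x (P ! (k - 1)) \<le> k - 1" using dd_prefix[OF P(1) P(2)] P(4) by simp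
    moreover have "hd (rev Q) = q" using Q(3) PQne by (simp add: hd_rev)
    ultimately show ?thesis using assms(4) that P(4) by auto
  qed
  have "nb L" unfolding L_def
    using nb_append[OF distinct_nb[OF P(5)] distinct_nb[of "rev Q"]] Q(5) PQne j1 j2 by simp
  then have "g < length L" using walk_girth wL ndL by blast
  then show ?thesis unfolding L_def using P(4) Q(4) by simp
qed

lemma F_common:
  assumes "W E x p k" "dd E x p = k" "W E x q k" "dd E x q = k" "p \<noteq> q"
    "E p w" "E q w" "dd E x w = Suc k"
  shows "g \<le> 2 * k + 2"
proof -
  obtain P where P: "walk E P" "hd P = x" "last P = p" "length P = Suc k" "distinct P"
    using shortest assms(1,2) by blast
  obtain Q where Q: "walk E Q" "hd Q = x" "last Q = q" "length Q = Suc k" "distinct Q"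
    using shortest assms(3,4) by blast
  have PQne: "P \<noteq> []" "Q \<noteq> []" using P Q by auto
  define R where "R = w # rev Q"
  define L where "L = P @ R"
  have wR: "walk E R" unfolding R_def
    using walk_append[OF walk_single[of E w] walk_rev[OF _ Q(1)]] sym assms(7) Q(3) PQne
    by (simp add: hd_rev)
  have wL: "walk E L" unfolding L_def
    using walk_append[OF P(1) wR] assms(6) P(3) unfolding R_def by simp
  have "x \<in> set P" using P(2) PQne(1) hd_in_set by metis
  moreover have "x \<in> set R" using Q(2) PQne(2) hd_in_set set_rev unfolding R_def by (metis list.set_intros(2))
  ultimately have ndL: "\<not> distinct L" unfolding L_def by auto
  have "w \<notin> set Q"
  proof
    assume "w \<in> set Q"
    then obtain t where "t < length Q" "Q ! t = w" by (auto simp: in_set_conv_nth)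
    then show False using dd_prefix[OF Q(1) Q(2), of t] Q(4) assms(8) by simp
  qed
  then have dR: "distinct R" unfolding R_def using Q(5) by simp
  have j1: "last P \<noteq> R ! 1" if "length R \<ge> 2"
  proof -
    have "R ! 1 = q" unfolding R_def using Q(3) PQne by (simp add: rev_nth last_conv_nth)
    then show ?thesis using P(3) assms(5) by simp
  qed
  have j2: "P ! (length P - 2) \<noteq> hd R" if "length P \<ge> 2"
  proof -
    have "dd E x (P ! (k - 1)) \<le> k - 1" using dd_prefix[OF P(1) P(2)] P(4) by simp
    then show ?thesis using assms(8) that P(4) unfolding R_def by auto
  qed
  have "nb L" unfolding L_def
    using nb_append[OF distinct_nb[OF P(5)] distinct_nb[OF dR]] PQne j1 j2 unfolding R_def by simp
  then have "g < length L" using walk_girth wL ndL by blast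
  then show ?thesis unfolding L_def R_def using P(4) Q(4) by simp
qed

end


theorem lemma1:
  fixes V :: "'a set" and E :: "'a \<Rightarrow> 'a \<Rightarrow> bool" and d g :: nat and \<psi> :: "'a \<Rightarrow> 'a"
  assumes "sgraph V E" and "V \<noteq> {}" and "d \<ge> 1"
    and "regular V E d" and "girth_ge V E g"
    and "\<psi> ` V \<subseteq> V"
    and "\<exists>r::nat. rad V E \<psi> = enat r \<and> real r < real g / 2 - 1"
  shows "real (card {v \<in> V. real (card (\<psi> ` neighbors E v)) < real d - sqrt (real d)})
           / real (card V) < 1 / sqrt (real d)"
proof -
  interpret gg V E g using assms(1,5) by unfold_locales
  have finV: "finite V" using assms(1) unfolding sgraph_def by blast
  obtain r where r: "rad V E \<psi> = enat r" "real r < real g / 2 - 1" using assms(7) by blast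
  have "real (2 * r + 2) < real g" using r(2) by simp
  then have r2: "2 * r + 2 < g" by linarith
  have R: "W E (\<psi> a) a (dd E (\<psi> a) a) \<and> dd E (\<psi> a) a \<le> r" if a: "a \<in> V" for a
  proof -
    have "gdist E a (\<psi> a) \<le> enat r" using SUP_upper[OF a, of "\<lambda>v. gdist E v (\<psi> v)"] r(1)
      unfolding rad_def by simp
    then have gle: "gdist E a (\<psi> a) \<le> enat r" .
    let ?P = "\<lambda>k. \<exists>xs. walk E xs \<and> hd xs = a \<and> last xs = \<psi> a \<and> length xs = Suc k"
    let ?k = "Least ?P"
    have ex: "\<exists>xs. walk E xs \<and> hd xs = a \<and> last xs = \<psi> a"
    proof (rule ccontr)
      assume "\<not> (\<exists>xs. walk E xs \<and> hd xs = a \<and> last xs = \<psi> a)"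
      then have "gdist E a (\<psi> a) = \<infinity>" unfolding gdist_def by simp
      then show False using gle by simp
    qed
    then have "gdist E a (\<psi> a) = enat ?k" unfolding gdist_def by simp
    then have le: "?k \<le> r" using gle by simp
    have "\<exists>k. ?P k"
    proof -
      obtain xs where "walk E xs" "hd xs = a" "last xs = \<psi> a" using ex by blast
      moreover have "length xs = Suc (length xs - 1)" using \<open>walk E xs\<close> unfolding walk_def by simp
      ultimately show ?thesis by blast
    qed
    then have "?P ?k" by (rule LeastI_ex)
    then obtain xs where xs: "walk E xs" "hd xs = a" "last xs = \<psi> a" "length xs = Suc ?k" by blast
    have wr: "walk E (rev xs)" using walk_rev[of E xs] sym xs(1) by blast
    have ne: "xs \<noteq> []" using xs(1) unfolding walk_def by simp
    have "hd (rev xs) = \<psi> a" "last (rev xs) = a" "length (rev xs) = Suc ?k"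
      using xs ne by (simp_all add: hd_rev last_rev)
    then have Wk: "W E (\<psi> a) a ?k" unfolding W_def using wr by blast
    have "dd E (\<psi> a) a \<le> ?k" by (rule dd_le[OF Wk])
    then show ?thesis using dd_W[OF Wk] le by simp
  qed
  have near: "W E (\<psi> a) v (dd E (\<psi> a) v) \<and> dd E (\<psi> a) v \<le> Suc (dd E (\<psi> a) a)
      \<and> dd E (\<psi> a) a \<le> Suc (dd E (\<psi> a) v)" if "a \<in> V" "E a v" for a v
  proof -
    have Ra: "W E (\<psi> a) a (dd E (\<psi> a) a)" using R[OF that(1)] by (rule conjunct1)
    have w1: "W E (\<psi> a) v (Suc (dd E (\<psi> a) a))" using W_snoc[OF Ra that(2)] .
    have w2: "W E (\<psi> a) v (dd E (\<psi> a) v)" using dd_W[OF w1] .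
    have w3: "W E (\<psi> a) a (Suc (dd E (\<psi> a) v))" using W_snoc[OF w2 sym[OF that(2)]] .
    show ?thesis using w2 dd_le[OF w1] dd_le[OF w3] by simp
  qed
  define Ch where "Ch v = {a \<in> neighbors E v. Suc (dd E (\<psi> a) v) = dd E (\<psi> a) a}" for v
  have ChN: "Ch v \<subseteq> neighbors E v" for v unfolding Ch_def by blast
  have NV: "neighbors E v \<subseteq> V" for v unfolding neighbors_def using inV sym by blast
  have uniq: "v = v'" if a: "a \<in> V" "a \<in> Ch v" "a \<in> Ch v'" for a v v'
  proof (rule ccontr)
    assume ne: "v \<noteq> v'"
    let ?x = "\<psi> a"
    have e: "E a v" "E a v'" "E v a" "E v' a" using a sym unfolding Ch_def neighbors_def by auto
    have d1: "Suc (dd E ?x v) = dd E ?x a" "Suc (dd E ?x v') = dd E ?x a"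
      using a unfolding Ch_def by auto
    have eqd: "dd E ?x v' = dd E ?x v" using d1 by simp
    have W0: "W E ?x v (dd E ?x v)" using near[OF a(1) e(1)] by blast
    have W1: "W E ?x v' (dd E ?x v)" using near[OF a(1) e(2)] eqd by simp
    have "g \<le> 2 * dd E ?x v + 2"
      using F_common[OF W0 refl W1 eqd ne e(3) e(4) d1(1)[symmetric]] .
    then show False using R[OF a(1)] d1 r2 by linarith
  qed
  have inj: "inj_on \<psi> (neighbors E v - Ch v)" if v: "v \<in> V" for v
  proof
    fix a b assume a: "a \<in> neighbors E v - Ch v" and b: "b \<in> neighbors E v - Ch v"
      and eq: "\<psi> a = \<psi> b"
    show "a = b"
    proof (rule ccontr)
      assume ne: "a \<noteq> b"
      let ?x = "\<psi> a"
      have ea: "E a v" "E v a" and eb: "E b v" "E v b" using a b sym unfolding neighbors_def by auto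
      have aV: "a \<in> V" and bV: "b \<in> V" using ea(1) eb(1) inV by auto
      have na: "Suc (dd E ?x v) \<noteq> dd E ?x a" using a unfolding Ch_def by auto
      have nb': "Suc (dd E ?x v) \<noteq> dd E ?x b" using b eq unfolding Ch_def by auto
      have Na: "W E ?x v (dd E ?x v)" "dd E ?x v \<le> Suc (dd E ?x a)" "dd E ?x a \<le> Suc (dd E ?x v)"
        using near[OF aV ea(1)] by auto
      have Nb: "dd E ?x v \<le> Suc (dd E ?x b)" "dd E ?x b \<le> Suc (dd E ?x v)"
        using near[OF bV eb(1)] eq by auto
      have Ra: "W E ?x a (dd E ?x a)" "dd E ?x a \<le> r" using R[OF aV] by auto
      have Rb: "W E ?x b (dd E ?x b)" "dd E ?x b \<le> r" using R[OF bV] eq by auto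
      have va: "dd E ?x v = Suc (dd E ?x a)"
      proof (rule ccontr)
        assume "dd E ?x v \<noteq> Suc (dd E ?x a)"
        then have "dd E ?x v = dd E ?x a" using Na na by linarith
        then have "g \<le> 2 * dd E ?x a + 1" using F_adj[of ?x a "dd E ?x a" v] Ra Na ea by simp
        then show False using Ra r2 by linarith
      qed
      have vb: "dd E ?x v = Suc (dd E ?x b)"
      proof (rule ccontr)
        assume "dd E ?x v \<noteq> Suc (dd E ?x b)"
        then have "dd E ?x v = dd E ?x b" using Nb nb' by linarith
        then have "g \<le> 2 * dd E ?x b + 1" using F_adj[of ?x b "dd E ?x b" v] Rb Na eb by simp
        then show False using Rb r2 by linarith
      qed
      have "g \<le> 2 * dd E ?x a + 2"
        using F_common[of ?x a "dd E ?x a" b v] Ra Rb va vb ne ea eb Na by simp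
      then show False using Ra r2 by linarith
    qed
  qed
  have bound: "real d - real (card (Ch v)) \<le> real (card (\<psi> ` neighbors E v))" if v: "v \<in> V" for v
  proof -
    have finN: "finite (neighbors E v)" using NV finV finite_subset by blast
    have "card (neighbors E v) = d" using assms(4) v unfolding regular_def by blast
    moreover have "card (neighbors E v - Ch v) = card (neighbors E v) - card (Ch v)"
      using card_Diff_subset[OF finite_subset[OF ChN finN] ChN] .
    moreover have "card (Ch v) \<le> card (neighbors E v)" using card_mono[OF finN ChN] .
    moreover have "card (\<psi> ` (neighbors E v - Ch v)) = card (neighbors E v - Ch v)"
      using card_image[OF inj[OF v]] .
    moreover have "card (\<psi> ` (neighbors E v - Ch v)) \<le> card (\<psi> ` neighbors E v)"
      using finN by (intro card_mono) auto
    ultimately show ?thesis by linarith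
  qed
  have sumb: "(\<Sum>v\<in>V. real (card (Ch v))) \<le> real (card V)"
  proof -
    have c1: "real (card (Ch v)) = (\<Sum>a\<in>V. if a \<in> Ch v then 1 else 0)" for v
    proof -
      have e: "Ch v = {a \<in> V. a \<in> Ch v}" using ChN NV by blast
      have "real (card (Ch v)) = real (card {a \<in> V. a \<in> Ch v})" using e by simp
      also have "\<dots> = (\<Sum>a\<in>{a \<in> V. a \<in> Ch v}. (1::real))" by simp
      also have "\<dots> = (\<Sum>a\<in>V. if a \<in> Ch v then 1 else 0)" by (rule sum.inter_filter[OF finV])
      finally show ?thesis .
    qed
    have c2: "(\<Sum>v\<in>V. if a \<in> Ch v then 1 else 0) \<le> (1::real)" if a: "a \<in> V" for a
    proof -
      have "card {v \<in> V. a \<in> Ch v} \<le> Suc 0"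
        using card_le_Suc0_iff_eq[of "{v \<in> V. a \<in> Ch v}"] finV uniq[OF a] by auto
      moreover have "(\<Sum>v\<in>V. if a \<in> Ch v then 1 else 0) = real (card {v \<in> V. a \<in> Ch v})"
        using sum.inter_filter[OF finV, of "\<lambda>_. (1::real)" "\<lambda>v. a \<in> Ch v"] by simp
      ultimately show ?thesis by simp
    qed
    have "(\<Sum>v\<in>V. real (card (Ch v))) = (\<Sum>v\<in>V. \<Sum>a\<in>V. if a \<in> Ch v then 1 else 0)"
      using c1 by simp
    also have "\<dots> = (\<Sum>a\<in>V. \<Sum>v\<in>V. if a \<in> Ch v then 1 else 0)" by (rule sum.swap)
    also have "\<dots> \<le> (\<Sum>a\<in>V. 1)" using c2 by (intro sum_mono) auto
    finally show ?thesis by simp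
  qed
  define B where "B = {v \<in> V. real (card (\<psi> ` neighbors E v)) < real d - sqrt (real d)}"
  have sd: "sqrt (real d) > 0" using assms(3) by simp
  have cV: "real (card V) > 0" using finV assms(2) by (simp add: card_gt_0_iff)
  show ?thesis
  proof (cases "B = {}")
    case True
    then show ?thesis using sd unfolding B_def[symmetric] by simp
  next
    case False
    have finB: "finite B" using finV unfolding B_def by simp
    have "(\<Sum>v\<in>B. sqrt (real d)) < (\<Sum>v\<in>B. real (card (Ch v)))"
    proof (rule sum_strict_mono[OF finB False])
      fix v assume "v \<in> B"
      then show "sqrt (real d) < real (card (Ch v))" using bound unfolding B_def by fastforce
    qed
    also have "\<dots> \<le> (\<Sum>v\<in>V. real (card (Ch v)))"
      using finV unfolding B_def by (intro sum_mono2) auto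
    also have "\<dots> \<le> real (card V)" by (rule sumb)
    finally have "real (card B) * sqrt (real d) < real (card V)" by simp
    then have "real (card B) / real (card V) < 1 / sqrt (real d)"
      using sd cV by (simp add: field_simps)
    then show ?thesis unfolding B_def .
  qed
qed

end
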